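(* Let $\mathcal{H}$ be a complex Hilbert space and $X:=\mathcal{V}(\mathcal{H})_A\times(0,1)_L$ with the product topology. Let $\Gamma\underline{[0,1]}^{\succeq}$ be the set of functions $\gamma:\mathcal{V}(\mathcal{H})\to[0,1]$ with $\gamma(V')\geq\gamma(V)$ whenever $V'\subseteq V$, partially ordered pointwise. Define $\ell(\gamma)$, a truth value in $\mathrm{Sh}(X)$ (i.e. an open subset of $X$), as the union of the basic open sets ${\downarrow}V'\times(0,r')$ over all pairs $(V',r')$ with $V'\in\mathcal{V}(\mathcal{H})$, $r'\in(0,1]$ and $\gamma(V')\geq r'$. Then $\ell$ is injective, and for every family $(\gamma_i)_{i\in I}$ in $\Gamma\underline{[0,1]}^{\succeq}$ one has $\ell(\bigvee_i\gamma_i)=\bigvee_i\ell(\gamma_i)$, where $(\bigvee_i\gamma_i)(V)=\sup_i\gamma_i(V)$ and the join on the right is the join of truth values (union of open sets).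
   Context: $\mathcal{V}(\mathcal{H})$ is the poset, under inclusion, of non-trivial commutative von Neumann subalgebras of $B(\mathcal{H})$ containing the identity; $\mathcal{V}(\mathcal{H})_A$ is this poset with the topology whose open sets are the lower sets, and ${\downarrow}V:=\{V'\mid V'\subseteq V\}$. $(0,1)_L$ is the set $(0,1)$ with topology consisting of the sets $(0,r)$, $0\leq r\leq1$ (with $(0,0)=\emptyset$). The global elements of the subobject classifier of the sheaf topos $\mathrm{Sh}(X)$ are identified with the open subsets of $X$; equivalently $\ell(\gamma)$ assigns to each basic open $\langle V,r\rangle={\downarrow}V\times(0,r)$ the sieve $\{\langle V',r'\rangle\preceq\langle V,r\rangle\mid\gamma(V')\geq r'\}$, where $\langle V',r'\rangle\preceq\langle V,r\rangle$ iff $V'\subseteq V$ and $r'\leq r$. *)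

theory Defs
  imports Complex_Main
begin

text \<open>The poset V(H) is modelled by an arbitrary partially ordered type 'v
  (the order playing the role of inclusion).  Points of X = V(H)_A x (0,1)_L are
  pairs (V, r); truth values of Sh(X) are open subsets of X, i.e. sets of such pairs.\<close>

definition down :: "'v::order \<Rightarrow> 'v set" where
  "down V = {W. W \<le> V}"

definition Gamma_antitone :: "('v::order \<Rightarrow> real) set" where
  "Gamma_antitone = {\<gamma>. (\<forall>V. 0 \<le> \<gamma> V \<and> \<gamma> V \<le> 1) \<and>
                          (\<forall>V V'. V' \<le> V \<longrightarrow> \<gamma> V \<le> \<gamma> V')}"

definition ell :: "('v::order \<Rightarrow> real) \<Rightarrow> ('v \<times> real) set" where
  "ell \<gamma> = \<Union> {down V' \<times> {0<..<r'} | V' r'. r' \<in> {0<..1} \<and> \<gamma> V' \<ge> r'}"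

text \<open>Pointwise join in [0,1]; the join of the empty family is the bottom 0.\<close>
definition gamma_join :: "'i set \<Rightarrow> ('i \<Rightarrow> 'v \<Rightarrow> real) \<Rightarrow> 'v \<Rightarrow> real" where
  "gamma_join I g V = (if I = {} then 0 else (SUP i\<in>I. g i V))"

end

theory Submission
  imports Defs
begin

lemma ell_char:
  assumes "\<gamma> \<in> Gamma_antitone"
  shows "ell \<gamma> = {(W,s). 0 < s \<and> s < \<gamma> W}"
proof (intro set_eqI iffI)
  fix p assume "p \<in> ell \<gamma>"
  then obtain V' r' where "p \<in> down V' \<times> {0<..<r'}" "r' \<in> {0<..1}" "\<gamma> V' \<ge> r'"
    unfolding ell_def by blast
  moreover obtain W s where p: "p = (W,s)" by fastforce
  ultimately have "W \<le> V'" "0 < s" "s < r'" by (auto simp: down_def)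
  with assms \<open>\<gamma> V' \<ge> r'\<close> have "s < \<gamma> W" unfolding Gamma_antitone_def by force
  with \<open>0<s\<close> p show "p \<in> {(W,s). 0 < s \<and> s < \<gamma> W}" by simp
next
  fix p assume "p \<in> {(W,s). 0 < s \<and> s < \<gamma> W}"
  then obtain W s where p: "p = (W,s)" "0 < s" "s < \<gamma> W" by blast
  have "\<gamma> W \<le> 1" using assms unfolding Gamma_antitone_def by blast
  have "p \<in> down W \<times> {0<..<\<gamma> W}" using p by (auto simp: down_def)
  moreover have "\<gamma> W \<in> {0<..1}" using p \<open>\<gamma> W \<le> 1\<close> by auto
  ultimately show "p \<in> ell \<gamma>" unfolding ell_def by blast
qed

lemma inj_part: "inj_on (ell :: ('v::order \<Rightarrow> real) \<Rightarrow> _) Gamma_antitone"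
proof (rule inj_onI)
  fix f g :: "'v \<Rightarrow> real"
  assume f: "f \<in> Gamma_antitone" and g: "g \<in> Gamma_antitone" and e: "ell f = ell g"
  have E: "\<And>W s. (0 < s \<and> s < f W) = (0 < s \<and> s < g W)"
    using e ell_char[OF f] ell_char[OF g] by (metis (no_types, lifting) case_prod_conv mem_Collect_eq)
  show "f = g"
  proof
    fix W
    have f0: "0 \<le> f W" and g0: "0 \<le> g W" using f g unfolding Gamma_antitone_def by auto
    show "f W = g W"
    proof (rule ccontr)
      assume "f W \<noteq> g W"
      then consider "f W < g W" | "g W < f W" by linarith
      then show False
      proof cases
        case 1
        have "0 < (f W + g W)/2" "(f W + g W)/2 < g W" "\<not> (f W + g W)/2 < f W" using 1 f0 by auto
        then show False using E[of "(f W + g W)/2" W] by blast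
      next
        case 2
        have "0 < (f W + g W)/2" "(f W + g W)/2 < f W" "\<not> (f W + g W)/2 < g W" using 2 g0 by auto
        then show False using E[of "(f W + g W)/2" W] by blast
      qed
    qed
  qed
qed

lemma join_part:
  fixes I :: "'i set" and g :: "'i \<Rightarrow> 'v::order \<Rightarrow> real"
  assumes G: "\<forall>i\<in>I. g i \<in> Gamma_antitone"
  shows "ell (gamma_join I g) = (\<Union>i\<in>I. ell (g i))"
proof (cases "I = {}")
  case True
  have "ell (gamma_join I g) = {}" unfolding ell_def gamma_join_def using True by auto
  then show ?thesis using True by simp
next
  case ne: False
  have bdd: "\<And>V. bdd_above ((\<lambda>i. g i V) ` I)"
    using G unfolding Gamma_antitone_def bdd_above_def by blast
  show ?thesis
  proof (intro set_eqI iffI)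
    fix p assume "p \<in> ell (gamma_join I g)"
    then obtain V' r' where p1: "p \<in> down V' \<times> {0<..<r'}" "r' \<in> {0<..1}"
      "gamma_join I g V' \<ge> r'" unfolding ell_def by blast
    obtain W s where p: "p = (W,s)" by fastforce
    have "W \<le> V'" "0 < s" "s < r'" using p1 p by (auto simp: down_def)
    have "s < (SUP i\<in>I. g i V')" using p1 \<open>s < r'\<close> ne unfolding gamma_join_def by auto
    then obtain i where i: "i \<in> I" "s < g i V'"
      using less_cSUP_iff[OF ne bdd] by blast
    have "g i V' \<le> 1" using G i unfolding Gamma_antitone_def by blast
    have "p \<in> down V' \<times> {0<..<g i V'}" using p i \<open>W \<le> V'\<close> \<open>0<s\<close> by (auto simp: down_def)
    moreover have "g i V' \<in> {0<..1}" using i \<open>0<s\<close> \<open>g i V' \<le> 1\<close> by auto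
    ultimately have "p \<in> ell (g i)" unfolding ell_def by blast
    then show "p \<in> (\<Union>i\<in>I. ell (g i))" using i by blast
  next
    fix p assume "p \<in> (\<Union>i\<in>I. ell (g i))"
    then obtain i where i: "i \<in> I" "p \<in> ell (g i)" by blast
    then obtain V' r' where p1: "p \<in> down V' \<times> {0<..<r'}" "r' \<in> {0<..1}"
      "g i V' \<ge> r'" unfolding ell_def by blast
    have "g i V' \<le> (SUP i\<in>I. g i V')" using cSUP_upper[OF i(1) bdd] .
    then have "gamma_join I g V' \<ge> r'" using p1 ne unfolding gamma_join_def by auto
    then show "p \<in> ell (gamma_join I g)" using p1 unfolding ell_def by blast
  qed
qed

theorem mainTheorem7:
  shows "inj_on (ell :: ('v::order \<Rightarrow> real) \<Rightarrow> _) Gamma_antitone \<and>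
         (\<forall>(I :: 'i set) (g :: 'i \<Rightarrow> 'v \<Rightarrow> real).
            (\<forall>i\<in>I. g i \<in> Gamma_antitone) \<longrightarrow>
            ell (gamma_join I g) = (\<Union>i\<in>I. ell (g i)))"
  using inj_part join_part by blast

end
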